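(* Let $p,q$ be positive integers and $k,\ell$ positive integers with $k\le \ell$, and let $A=\{a_1<\cdots<a_p\}$, $B=\{b_1<\cdots<b_q\}$ be linearly ordered sets. Fix indices $i_1,\dots,i_{k-1}\in\{1,\dots,p\}$, and let $(G;A,B)$ be the ordered bipartite graph with edge set $$\{a_ib_j: 1\le i\le p,\ 1\le j\le \ell-1\}\cup\{a_{i_h}b_j: \ell\le j\le q,\ 1\le h\le k-1\}.$$ Suppose $k\le p$, $\ell\le q$ and $k\le p\le \ell-1$. Then (i) $(G;A,B)$ is $K_{k,\ell}$-interval minor free; (ii) $m(p,q,k,\ell)\geq (\ell-1)(p-k+1)+q(k-1)$.
   Context: An ordered bipartite graph $(G;A,B)$ is a simple bipartite graph $G$ with parts $A,B$, each equipped with a linear order. Two vertices $u<v$ of the same part are consecutive if no vertex $w$ of that part satisfies $u<w<v$. Identifying two consecutive vertices $u,v$ of a part replaces them by a single vertex $w$ (in their position in the order) with $N(w)=N(u)\cup N(v)$; the result is again a simple ordered bipartite graph. Two ordered bipartite graphs are isomorphic if there is a graph isomorphism between them mapping parts to parts (possibly exchanging the two parts) and preserving the linear orders of the parts. An ordered bipartite graph $H$ is an interval minor of $G$ if a graph isomorphic to $H$ can be obtained from $G$ by repeatedly deleting edges and identifying two consecutive vertices; $G$ is $H$-interval minor free otherwise. $m(p,q,k,\ell)$ denotes the maximum number of edges of an ordered bipartite graph with parts of sizes $p$ and $q$ that is $K_{k,\ell}$-interval minor free. *)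

theory Defs
  imports Main
begin

text \<open>An ordered bipartite graph is represented canonically as (p, q, E):
  part A = {0..<p} and part B = {0..<q}, each with the natural order,
  and E \<subseteq> {0..<p} \<times> {0..<q} the edge set (an edge (i,j) joins a_i and b_j).\<close>

type_synonym obg = "nat \<times> nat \<times> (nat \<times> nat) set"

definition obg_wf :: "obg \<Rightarrow> bool" where
  "obg_wf G = (case G of (p, q, E) \<Rightarrow> E \<subseteq> {0..<p} \<times> {0..<q})"

text \<open>Index map when the consecutive vertices i and i+1 are identified into one vertex
  placed at position i (vertices after i+1 shift down by one).\<close>
definition merge_idx :: "nat \<Rightarrow> nat \<Rightarrow> nat" where
  "merge_idx i x = (if x \<le> i then x else x - 1)"

inductive obg_step :: "obg \<Rightarrow> obg \<Rightarrow> bool" where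
  del_edge: "e \<in> E \<Longrightarrow> obg_step (p, q, E) (p, q, E - {e})"
| ident_A: "Suc i < p \<Longrightarrow>
     obg_step (p, q, E) (p - 1, q, (\<lambda>(a, b). (merge_idx i a, b)) ` E)"
| ident_B: "Suc j < q \<Longrightarrow>
     obg_step (p, q, E) (p, q - 1, (\<lambda>(a, b). (a, merge_idx j b)) ` E)"

text \<open>Isomorphism of ordered bipartite graphs (parts may be exchanged; order-preserving
  bijections between {0..<n} are identities).\<close>
definition obg_iso :: "obg \<Rightarrow> obg \<Rightarrow> bool" where
  "obg_iso G H = (case G of (p, q, E) \<Rightarrow> case H of (p', q', E') \<Rightarrow>
      (p = p' \<and> q = q' \<and> E = E') \<or> (p = q' \<and> q = p' \<and> E' = prod.swap ` E))"

definition interval_minor :: "obg \<Rightarrow> obg \<Rightarrow> bool" where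
  "interval_minor H G = (\<exists>G'. obg_step\<^sup>*\<^sup>* G G' \<and> obg_iso H G')"

definition K_obg :: "nat \<Rightarrow> nat \<Rightarrow> obg" where
  "K_obg k l = (k, l, {0..<k} \<times> {0..<l})"

definition m_fun :: "nat \<Rightarrow> nat \<Rightarrow> nat \<Rightarrow> nat \<Rightarrow> nat" where
  "m_fun p q k l = Max {card E | E. E \<subseteq> {0..<p} \<times> {0..<q} \<and>
                                   \<not> interval_minor (K_obg k l) (p, q, E)}"

end

theory Submission
  imports Defs
begin

definition inv_g :: "nat \<Rightarrow> nat \<Rightarrow> nat \<Rightarrow> obg \<Rightarrow> bool" where
  "inv_g p k l G = (case G of (p', q', E) \<Rightarrow> p' \<le> p \<and>
     (\<exists>S. finite S \<and> card S \<le> k - 1 \<and> (\<forall>(a,b)\<in>E. l - 1 \<le> b \<longrightarrow> a \<in> S)))"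

lemma merge_idx_le: "merge_idx j b \<le> b"
  unfolding merge_idx_def by simp

lemma inv_g_iff: "inv_g p k l (p', q', E) \<longleftrightarrow> p' \<le> p \<and>
     (\<exists>S. finite S \<and> card S \<le> k - 1 \<and> (\<forall>a b. (a,b)\<in>E \<longrightarrow> l - 1 \<le> b \<longrightarrow> a \<in> S))"
  unfolding inv_g_def by auto

lemma inv_step:
  assumes "obg_step G H" "inv_g p k l G" shows "inv_g p k l H"
  using assms
proof (induction rule: obg_step.induct)
  case (del_edge e E p' q)
  then obtain S where S: "p' \<le> p" "finite S" "card S \<le> k - 1"
    "\<forall>a b. (a,b)\<in>E \<longrightarrow> l - 1 \<le> b \<longrightarrow> a \<in> S" unfolding inv_g_iff by blast
  have "\<forall>a b. (a,b)\<in>E - {e} \<longrightarrow> l - 1 \<le> b \<longrightarrow> a \<in> S" using S(4) by blast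
  then show ?case unfolding inv_g_iff using S(1-3) by blast
next
  case (ident_A i p' q E)
  then obtain S where S: "p' \<le> p" "finite S" "card S \<le> k - 1"
    "\<forall>a b. (a,b)\<in>E \<longrightarrow> l - 1 \<le> b \<longrightarrow> a \<in> S" unfolding inv_g_iff by blast
  have c: "card (merge_idx i ` S) \<le> k - 1" using S(3) card_image_le[OF S(2), of "merge_idx i"] by linarith
  have f: "finite (merge_idx i ` S)" using S(2) by blast
  have "\<forall>a b. (a,b)\<in>(\<lambda>(a, b). (merge_idx i a, b)) ` E \<longrightarrow> l - 1 \<le> b \<longrightarrow> a \<in> merge_idx i ` S"
  proof (intro allI impI)
    fix a b assume "(a,b)\<in>(\<lambda>(a, b). (merge_idx i a, b)) ` E" "l - 1 \<le> b"
    then obtain a0 where "(a0, b) \<in> E" "a = merge_idx i a0" by auto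
    then show "a \<in> merge_idx i ` S" using S(4) \<open>l - 1 \<le> b\<close> by blast
  qed
  moreover have "p' - 1 \<le> p" using S(1) by simp
  ultimately show ?case unfolding inv_g_iff using c f by blast
next
  case (ident_B j q p' E)
  then obtain S where S: "p' \<le> p" "finite S" "card S \<le> k - 1"
    "\<forall>a b. (a,b)\<in>E \<longrightarrow> l - 1 \<le> b \<longrightarrow> a \<in> S" unfolding inv_g_iff by blast
  have "\<forall>a b. (a,b)\<in>(\<lambda>(a, b). (a, merge_idx j b)) ` E \<longrightarrow> l - 1 \<le> b \<longrightarrow> a \<in> S"
  proof (intro allI impI)
    fix a b assume "(a,b)\<in>(\<lambda>(a, b). (a, merge_idx j b)) ` E" "l - 1 \<le> b"
    then obtain b0 where "(a, b0) \<in> E" "b = merge_idx j b0" by auto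
    moreover have "merge_idx j b0 \<le> b0" by (rule merge_idx_le)
    ultimately show "a \<in> S" using S(4) \<open>l - 1 \<le> b\<close> by (meson le_trans)
  qed
  then show ?case unfolding inv_g_iff using S(1-3) by blast
qed

lemma inv_steps:
  assumes "obg_step\<^sup>*\<^sup>* G H" "inv_g p k l G" shows "inv_g p k l H"
  using assms by (induction rule: rtranclp_induct) (auto intro: inv_step)

lemma free_lemma:
  fixes p q k l :: nat and ih :: "nat \<Rightarrow> nat"
  assumes "0 < k" "0 < l" "p \<le> l - 1"
  shows "\<not> interval_minor (K_obg k l)
            (p, q, {(i, j). i < p \<and> j < l - 1} \<union>
                   {(ih h, j) | h j. h < k - 1 \<and> l - 1 \<le> j \<and> j < q})"
proof
  assume "interval_minor (K_obg k l)
            (p, q, {(i, j). i < p \<and> j < l - 1} \<union>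
                   {(ih h, j) | h j. h < k - 1 \<and> l - 1 \<le> j \<and> j < q})"
  then obtain G' where st: "obg_step\<^sup>*\<^sup>* (p, q, {(i, j). i < p \<and> j < l - 1} \<union>
                   {(ih h, j) | h j. h < k - 1 \<and> l - 1 \<le> j \<and> j < q}) G'"
    and iso: "obg_iso (K_obg k l) G'" unfolding interval_minor_def by blast
  have "inv_g p k l (p, q, {(i, j). i < p \<and> j < l - 1} \<union>
                   {(ih h, j) | h j. h < k - 1 \<and> l - 1 \<le> j \<and> j < q})"
  proof -
    let ?S = "ih ` {..<k-1}"
    have "card ?S \<le> k - 1" using card_image_le[of "{..<k-1}" ih] by simp
    moreover have "\<forall>(a,b)\<in>{(i, j). i < p \<and> j < l - 1} \<union>
                   {(ih h, j) | h j. h < k - 1 \<and> l - 1 \<le> j \<and> j < q}. l - 1 \<le> b \<longrightarrow> a \<in> ?S"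
    proof (intro ballI, clarify)
      fix a b assume "(a, b) \<in> {(i, j). i < p \<and> j < l - 1} \<union>
                   {(ih h, j) | h j. h < k - 1 \<and> l - 1 \<le> j \<and> j < q}" "l - 1 \<le> b"
      then show "a \<in> ?S" by auto
    qed
    ultimately show ?thesis unfolding inv_g_def by blast
  qed
  from inv_steps[OF st this] have I: "inv_g p k l G'" .
  obtain p' q' E' where G': "G' = (p', q', E')" by (cases G') auto
  from I G' obtain S where S: "p' \<le> p" "finite S" "card S \<le> k - 1"
    "\<forall>(a,b)\<in>E'. l - 1 \<le> b \<longrightarrow> a \<in> S" unfolding inv_g_def by auto
  from iso G' have "(k = p' \<and> l = q' \<and> E' = {0..<k} \<times> {0..<l}) \<or> (k = q' \<and> l = p')"
    unfolding obg_iso_def K_obg_def by auto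
  then show False
  proof
    assume h: "k = p' \<and> l = q' \<and> E' = {0..<k} \<times> {0..<l}"
    have "{0..<k} \<subseteq> S"
    proof
      fix a assume "a \<in> {0..<k}"
      then have "(a, l - 1) \<in> E'" using h assms by auto
      then show "a \<in> S" using S(4) by auto
    qed
    then have "card {0..<k} \<le> card S" using S(2) card_mono by blast
    then show False using S(3) assms by simp
  next
    assume "k = q' \<and> l = p'"
    then show False using S(1) assms by simp
  qed
qed

theorem lemma2p3:
  fixes p q k l :: nat and ih :: "nat \<Rightarrow> nat"
  assumes "0 < p" and "0 < q" and "0 < k" and "0 < l" and "k \<le> l"
    and "\<forall>h < k - 1. ih h < p"
    and "k \<le> p" and "l \<le> q" and "p \<le> l - 1"
  shows "\<not> interval_minor (K_obg k l)
            (p, q, {(i, j). i < p \<and> j < l - 1} \<union>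
                   {(ih h, j) | h j. h < k - 1 \<and> l - 1 \<le> j \<and> j < q})
         \<and> m_fun p q k l \<ge> (l - 1) * (p - k + 1) + q * (k - 1)"
proof
  show "\<not> interval_minor (K_obg k l)
            (p, q, {(i, j). i < p \<and> j < l - 1} \<union>
                   {(ih h, j) | h j. h < k - 1 \<and> l - 1 \<le> j \<and> j < q})"
    using free_lemma assms by blast
  define E0 where "E0 = {(i, j). i < p \<and> j < l - 1} \<union>
                   {((\<lambda>x. x) h, j) | h j. h < k - 1 \<and> l - 1 \<le> j \<and> j < q}"
  have free0: "\<not> interval_minor (K_obg k l) (p, q, E0)"
    unfolding E0_def by (rule free_lemma) (use assms in auto)
  have E0eq: "E0 = {0..<p} \<times> {0..<l-1} \<union> {0..<k-1} \<times> {l-1..<q}"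
    unfolding E0_def by auto
  have sub: "E0 \<subseteq> {0..<p} \<times> {0..<q}" unfolding E0eq using assms by auto
  have "card E0 = p * (l-1) + (k-1) * (q - (l-1))"
    unfolding E0eq by (subst card_Un_disjoint) auto
  also have "\<dots> = (l - 1) * (p - k + 1) + q * (k - 1)"
  proof -
    obtain a b k' l' where ab: "k = Suc k'" "l = Suc l'" "p = a + k'" "q = b + l'"
    proof
      show "k = Suc (k - 1)" "l = Suc (l - 1)" "p = (p - (k-1)) + (k - 1)" "q = (q - (l-1)) + (l - 1)"
        using assms by arith+
    qed
    show ?thesis using \<open>k \<le> p\<close> unfolding ab by (cases a) (simp_all add: algebra_simps)
  qed
  finally have cE: "card E0 = (l - 1) * (p - k + 1) + q * (k - 1)" .
  let ?M = "{card E | E. E \<subseteq> {0..<p} \<times> {0..<q} \<and> \<not> interval_minor (K_obg k l) (p, q, E)}"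
  have fin: "finite ?M"
  proof -
    have "?M \<subseteq> card ` Pow ({0..<p} \<times> {0..<q})" by auto
    then show ?thesis using finite_subset by blast
  qed
  have "card E0 \<in> ?M" using sub free0 by blast
  then have "card E0 \<le> Max ?M" using fin by (rule Max_ge[rotated])
  then show "m_fun p q k l \<ge> (l - 1) * (p - k + 1) + q * (k - 1)"
    unfolding m_fun_def cE .
qed

end
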